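(* Let $\mathfrak{A}$ be a complete atomic weakly associative relation algebra and $\mathfrak{B}$ its suitable structure. If $\langle u_0,u_1,u_2\rangle\in V(\mathfrak{B})$, then $\langle u_{\pi(0)},u_{\pi(1)},u_{\pi(2)}\rangle\in V(\mathfrak{B})$ for every function $\pi:\{0,1,2\}\to\{0,1,2\}$ that is not a permutation.
   Context: WA: algebras $\langle A,+,\overline{\phantom{x}},;,\breve{\phantom{x}},1'\rangle$ with $x\cdot y=\overline{\overline{x}+\overline{y}}$, $0'=\overline{1'}$, $1=1'+0'$, $0=\overline{1}$, satisfying for all $x,y,z$: $x+y=y+x$; $x+(y+z)=(x+y)+z$; $\overline{\overline{x}+\overline{y}}+\overline{\overline{x}+y}=x$; $((x\cdot 1');1);1=(x\cdot1');1$; $(x+y);z=x;z+y;z$; $x;1'=x$; $\breve{\breve{x}}=x$; $\breve{(x+y)}=\breve{x}+\breve{y}$; $\breve{(x;y)}=\breve{y};\breve{x}$; $\breve{x};\overline{x;y}+\overline{y}=\overline{y}$. Suitable structure $\mathfrak{B}=\langle B,T_\kappa,E_{\kappa\lambda}\rangle_{\kappa,\lambda<3}$: $B=\{s\in{}^3\mathrm{At}(\mathfrak{A}): s_2;s_0\ge s_1\}$; $T_\kappa=\{\langle s,t\rangle\in B\times B:s_\kappa=t_\kappa\}$; $E_{\kappa\kappa}=B$; for distinct $\kappa,\lambda$ with third index $\mu$, $E_{\kappa\lambda}=\{s\in B:s_\mu\le1'\}$. Trails: a $\mathfrak{B}$-trail is $p=\langle t_0,\kappa_0,\dots,t_n,\kappa_n\rangle$,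 $n\in\omega$, $t_i\in B$, $\kappa_i<3$, with $t_i\ne t_{i+1}$ and $\langle t_i,t_{i+1}\rangle\in T_{\kappa_i}$ for $i<n$; it ends at $t_n$. $\mathrm{Tr}(\mathfrak{B})$ = set of trails; $p\lambda=\langle t_0,\kappa_0,\dots,t_n,\lambda\rangle$. $\approx$ is the smallest equivalence relation on $\mathrm{Tr}(\mathfrak{B})$ with (for trails of the displayed forms): (a) $\langle t_0,\kappa_0,\dots,t_i,\lambda,s,\lambda,t_i,\kappa_i,\dots,t_n,\kappa_n\rangle\approx\langle t_0,\kappa_0,\dots,t_i,\kappa_i,\dots,t_n,\kappa_n\rangle$; (b) $\langle t_0,\kappa_0,\dots,t_n,\lambda,s,\nu\rangle\approx\langle t_0,\kappa_0,\dots,t_n,\nu\rangle$ if $\lambda\ne\nu$; (c) $\langle t_0,\kappa_0,\dots,t_n,\lambda\rangle\approx\langle t_0,\kappa_0,\dots,t_n,\kappa_n\rangle$ if $t_n\in E_{\lambda\kappa_n}$. $p^{\mathfrak{B}}$ = $\approx$-class of $p$; $V(\mathfrak{B})=\{\langle(p0)^{\mathfrak{B}},(p1)^{\mathfrak{B}},(p2)^{\mathfrak{B}}\rangle:p\in\mathrm{Tr}(\mathfrak{B})\}$. *)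

theory Defs
  imports Main
begin

text \<open>A WA-type structure on the whole type 'a is given by the operations
  pl (+), cm (complement), cp (relative product ;), cv (converse), e (identity 1').\<close>

definition wa_meet :: "('a\<Rightarrow>'a\<Rightarrow>'a) \<Rightarrow> ('a\<Rightarrow>'a) \<Rightarrow> 'a \<Rightarrow> 'a \<Rightarrow> 'a" where
  "wa_meet pl cm x y = cm (pl (cm x) (cm y))"

definition wa_top :: "('a\<Rightarrow>'a\<Rightarrow>'a) \<Rightarrow> ('a\<Rightarrow>'a) \<Rightarrow> 'a \<Rightarrow> 'a" where
  "wa_top pl cm e = pl e (cm e)"

definition wa_bot :: "('a\<Rightarrow>'a\<Rightarrow>'a) \<Rightarrow> ('a\<Rightarrow>'a) \<Rightarrow> 'a \<Rightarrow> 'a" where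
  "wa_bot pl cm e = cm (wa_top pl cm e)"

definition WA :: "('a\<Rightarrow>'a\<Rightarrow>'a) \<Rightarrow> ('a\<Rightarrow>'a) \<Rightarrow> ('a\<Rightarrow>'a\<Rightarrow>'a) \<Rightarrow> ('a\<Rightarrow>'a) \<Rightarrow> 'a \<Rightarrow> bool" where
  "WA pl cm cp cv e \<longleftrightarrow>
    (\<forall>x y z.
       pl x y = pl y x
     \<and> pl x (pl y z) = pl (pl x y) z
     \<and> pl (cm (pl (cm x) (cm y))) (cm (pl (cm x) y)) = x
     \<and> cp (cp (wa_meet pl cm x e) (wa_top pl cm e)) (wa_top pl cm e)
         = cp (wa_meet pl cm x e) (wa_top pl cm e)
     \<and> cp (pl x y) z = pl (cp x z) (cp y z)
     \<and> cp x e = x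
     \<and> cv (cv x) = x
     \<and> cv (pl x y) = pl (cv x) (cv y)
     \<and> cv (cp x y) = cp (cv y) (cv x)
     \<and> pl (cp (cv x) (cm (cp x y))) (cm y) = cm y)"

definition wa_le :: "('a\<Rightarrow>'a\<Rightarrow>'a) \<Rightarrow> 'a \<Rightarrow> 'a \<Rightarrow> bool" where
  "wa_le pl x y \<longleftrightarrow> pl x y = y"

definition wa_atom :: "('a\<Rightarrow>'a\<Rightarrow>'a) \<Rightarrow> ('a\<Rightarrow>'a) \<Rightarrow> 'a \<Rightarrow> 'a \<Rightarrow> bool" where
  "wa_atom pl cm e a \<longleftrightarrow> a \<noteq> wa_bot pl cm e \<and>
     (\<forall>y. wa_le pl y a \<longrightarrow> y = wa_bot pl cm e \<or> y = a)"

definition wa_atomic :: "('a\<Rightarrow>'a\<Rightarrow>'a) \<Rightarrow> ('a\<Rightarrow>'a) \<Rightarrow> 'a \<Rightarrow> bool" where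
  "wa_atomic pl cm e \<longleftrightarrow>
     (\<forall>x. x \<noteq> wa_bot pl cm e \<longrightarrow> (\<exists>a. wa_atom pl cm e a \<and> wa_le pl a x))"

definition wa_complete :: "('a\<Rightarrow>'a\<Rightarrow>'a) \<Rightarrow> bool" where
  "wa_complete pl \<longleftrightarrow>
     (\<forall>S. \<exists>s. (\<forall>x\<in>S. wa_le pl x s) \<and> (\<forall>t. (\<forall>x\<in>S. wa_le pl x t) \<longrightarrow> wa_le pl s t))"

definition nth3 :: "'b \<times> 'b \<times> 'b \<Rightarrow> nat \<Rightarrow> 'b" where
  "nth3 s k = (case s of (a, b, c) \<Rightarrow> if k = 0 then a else if k = 1 then b else c)"

definition sB :: "('a\<Rightarrow>'a\<Rightarrow>'a) \<Rightarrow> ('a\<Rightarrow>'a) \<Rightarrow> ('a\<Rightarrow>'a\<Rightarrow>'a) \<Rightarrow> 'a \<Rightarrow> ('a \<times> 'a \<times> 'a) set" where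
  "sB pl cm cp e = {s. (\<forall>k<3. wa_atom pl cm e (nth3 s k)) \<and>
                        wa_le pl (nth3 s 1) (cp (nth3 s 2) (nth3 s 0))}"

definition sT :: "('a\<Rightarrow>'a\<Rightarrow>'a) \<Rightarrow> ('a\<Rightarrow>'a) \<Rightarrow> ('a\<Rightarrow>'a\<Rightarrow>'a) \<Rightarrow> 'a \<Rightarrow> nat
                   \<Rightarrow> (('a \<times> 'a \<times> 'a) \<times> ('a \<times> 'a \<times> 'a)) set" where
  "sT pl cm cp e k = {(s, t). s \<in> sB pl cm cp e \<and> t \<in> sB pl cm cp e \<and> nth3 s k = nth3 t k}"

definition sE :: "('a\<Rightarrow>'a\<Rightarrow>'a) \<Rightarrow> ('a\<Rightarrow>'a) \<Rightarrow> ('a\<Rightarrow>'a\<Rightarrow>'a) \<Rightarrow> 'a \<Rightarrow> nat \<Rightarrow> nat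
                   \<Rightarrow> ('a \<times> 'a \<times> 'a) set" where
  "sE pl cm cp e k l =
     (if k = l then sB pl cm cp e
      else {s \<in> sB pl cm cp e. wa_le pl (nth3 s (3 - k - l)) e})"

text \<open>Trails: a trail <t0,k0,...,tn,kn> is represented as the nonempty list [(t0,k0),...,(tn,kn)].\<close>
definition trails :: "('a\<Rightarrow>'a\<Rightarrow>'a) \<Rightarrow> ('a\<Rightarrow>'a) \<Rightarrow> ('a\<Rightarrow>'a\<Rightarrow>'a) \<Rightarrow> 'a
                       \<Rightarrow> (('a \<times> 'a \<times> 'a) \<times> nat) list set" where
  "trails pl cm cp e = {p. p \<noteq> [] \<and>
      (\<forall>i<length p. fst (p ! i) \<in> sB pl cm cp e \<and> snd (p ! i) < 3) \<and>
      (\<forall>i. Suc i < length p \<longrightarrow> fst (p ! i) \<noteq> fst (p ! Suc i) \<and>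
           (fst (p ! i), fst (p ! Suc i)) \<in> sT pl cm cp e (snd (p ! i)))}"

definition trail_upd :: "('b \<times> nat) list \<Rightarrow> nat \<Rightarrow> ('b \<times> nat) list" where
  "trail_upd p l = butlast p @ [(fst (last p), l)]"

text \<open>Generating pairs (a), (b), (c) of the relation \<approx>.\<close>
definition trail_gen :: "('a\<Rightarrow>'a\<Rightarrow>'a) \<Rightarrow> ('a\<Rightarrow>'a) \<Rightarrow> ('a\<Rightarrow>'a\<Rightarrow>'a) \<Rightarrow> 'a
     \<Rightarrow> ((('a \<times> 'a \<times> 'a) \<times> nat) list \<times> (('a \<times> 'a \<times> 'a) \<times> nat) list) set" where
  "trail_gen pl cm cp e = {(p, q). p \<in> trails pl cm cp e \<and> q \<in> trails pl cm cp e \<and>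
      ((\<exists>xs ys t s l k. p = xs @ [(t, l), (s, l), (t, k)] @ ys \<and> q = xs @ [(t, k)] @ ys)
     \<or> (\<exists>xs t s l n. l \<noteq> n \<and> p = xs @ [(t, l), (s, n)] \<and> q = xs @ [(t, n)])
     \<or> (\<exists>xs t l k. p = xs @ [(t, l)] \<and> q = xs @ [(t, k)] \<and> t \<in> sE pl cm cp e l k))}"

definition trail_equiv :: "('a\<Rightarrow>'a\<Rightarrow>'a) \<Rightarrow> ('a\<Rightarrow>'a) \<Rightarrow> ('a\<Rightarrow>'a\<Rightarrow>'a) \<Rightarrow> 'a
     \<Rightarrow> ((('a \<times> 'a \<times> 'a) \<times> nat) list \<times> (('a \<times> 'a \<times> 'a) \<times> nat) list) set" where
  "trail_equiv pl cm cp e =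
     Id_on (trails pl cm cp e) \<union> (trail_gen pl cm cp e \<union> (trail_gen pl cm cp e)\<inverse>)\<^sup>+"

definition trail_class :: "('a\<Rightarrow>'a\<Rightarrow>'a) \<Rightarrow> ('a\<Rightarrow>'a) \<Rightarrow> ('a\<Rightarrow>'a\<Rightarrow>'a) \<Rightarrow> 'a
     \<Rightarrow> (('a \<times> 'a \<times> 'a) \<times> nat) list \<Rightarrow> (('a \<times> 'a \<times> 'a) \<times> nat) list set" where
  "trail_class pl cm cp e p = trail_equiv pl cm cp e `` {p}"

definition VB :: "('a\<Rightarrow>'a\<Rightarrow>'a) \<Rightarrow> ('a\<Rightarrow>'a) \<Rightarrow> ('a\<Rightarrow>'a\<Rightarrow>'a) \<Rightarrow> 'a
     \<Rightarrow> ((('a \<times> 'a \<times> 'a) \<times> nat) list set \<times> (('a \<times> 'a \<times> 'a) \<times> nat) list set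
         \<times> (('a \<times> 'a \<times> 'a) \<times> nat) list set) set" where
  "VB pl cm cp e = {(trail_class pl cm cp e (trail_upd p 0),
                     trail_class pl cm cp e (trail_upd p 1),
                     trail_class pl cm cp e (trail_upd p 2)) | p. p \<in> trails pl cm cp e}"

end

theory Submission
  imports Defs
begin


lemma all3: "(\<forall>k<3. P k) \<longleftrightarrow> P 0 \<and> P 1 \<and> P (2::nat)"
  unfolding numeral_3_eq_3 numeral_2_eq_2 by (auto simp: less_Suc_eq)

lemma trails_single: "[(t,l)] \<in> trails pl cm cp e \<longleftrightarrow> t \<in> sB pl cm cp e \<and> l < 3"
  by (auto simp: trails_def)

lemma trails_snoc:
  assumes "ys \<noteq> []"
  shows "ys @ [(s,n)] \<in> trails pl cm cp e \<longleftrightarrow> ys \<in> trails pl cm cp e \<and> s \<in> sB pl cm cp e \<and> n < 3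
     \<and> fst (last ys) \<noteq> s \<and> (fst (last ys), s) \<in> sT pl cm cp e (snd (last ys))"
proof -
  have lastn: "last ys = ys ! (length ys - 1)" using assms by (simp add: last_conv_nth)
  have L: "length ys > 0" using assms by simp
  show ?thesis
  proof
    assume h: "ys @ [(s,n)] \<in> trails pl cm cp e"
    hence h1: "\<forall>i<length ys + 1. fst ((ys @ [(s,n)]) ! i) \<in> sB pl cm cp e \<and> snd ((ys @ [(s,n)]) ! i) < 3"
      and h2: "\<forall>i. Suc i < length ys + 1 \<longrightarrow> fst ((ys @ [(s,n)]) ! i) \<noteq> fst ((ys @ [(s,n)]) ! Suc i) \<and>
           (fst ((ys @ [(s,n)]) ! i), fst ((ys @ [(s,n)]) ! Suc i)) \<in> sT pl cm cp e (snd ((ys @ [(s,n)]) ! i))"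
      by (auto simp: trails_def)
    have "ys \<in> trails pl cm cp e"
      unfolding trails_def
    proof (intro CollectI conjI allI impI)
      show "ys \<noteq> []" by fact
      fix i assume "i < length ys"
      thus "fst (ys ! i) \<in> sB pl cm cp e" "snd (ys ! i) < 3" using h1[rule_format, of i] by (auto simp: nth_append)
    next
      fix i assume "Suc i < length ys"
      thus "fst (ys ! i) \<noteq> fst (ys ! Suc i)" "(fst (ys ! i), fst (ys ! Suc i)) \<in> sT pl cm cp e (snd (ys ! i))"
        using h2[rule_format, of i] by (auto simp: nth_append)
    qed
    moreover have "s \<in> sB pl cm cp e \<and> n < 3" using h1[rule_format, of "length ys"] by simp
    moreover have "fst (last ys) \<noteq> s \<and> (fst (last ys), s) \<in> sT pl cm cp e (snd (last ys))"
      using h2[rule_format, of "length ys - 1"] L lastn by (auto simp: nth_append)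
    ultimately show "ys \<in> trails pl cm cp e \<and> s \<in> sB pl cm cp e \<and> n < 3
     \<and> fst (last ys) \<noteq> s \<and> (fst (last ys), s) \<in> sT pl cm cp e (snd (last ys))" by blast
  next
    assume h: "ys \<in> trails pl cm cp e \<and> s \<in> sB pl cm cp e \<and> n < 3
     \<and> fst (last ys) \<noteq> s \<and> (fst (last ys), s) \<in> sT pl cm cp e (snd (last ys))"
    show "ys @ [(s,n)] \<in> trails pl cm cp e"
      unfolding trails_def mem_Collect_eq
    proof (intro conjI)
      show "ys @ [(s,n)] \<noteq> []" by simp
      show "\<forall>i<length (ys @ [(s,n)]). fst ((ys @ [(s,n)]) ! i) \<in> sB pl cm cp e \<and> snd ((ys @ [(s,n)]) ! i) < 3"
      proof (intro allI impI)
        fix i assume i: "i < length (ys @ [(s,n)])"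
        have "i < length ys \<or> i = length ys" using i by auto
        thus "fst ((ys @ [(s,n)]) ! i) \<in> sB pl cm cp e \<and> snd ((ys @ [(s,n)]) ! i) < 3"
          using h by (auto simp: nth_append trails_def)
      qed
      show "\<forall>i. Suc i < length (ys @ [(s,n)]) \<longrightarrow> fst ((ys @ [(s,n)]) ! i) \<noteq> fst ((ys @ [(s,n)]) ! Suc i) \<and>
        (fst ((ys @ [(s,n)]) ! i), fst ((ys @ [(s,n)]) ! Suc i)) \<in> sT pl cm cp e (snd ((ys @ [(s,n)]) ! i))"
      proof (intro allI impI)
        fix i assume i: "Suc i < length (ys @ [(s,n)])"
        have "Suc i < length ys \<or> Suc i = length ys" using i by auto
        thus "fst ((ys @ [(s,n)]) ! i) \<noteq> fst ((ys @ [(s,n)]) ! Suc i) \<and>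
          (fst ((ys @ [(s,n)]) ! i), fst ((ys @ [(s,n)]) ! Suc i)) \<in> sT pl cm cp e (snd ((ys @ [(s,n)]) ! i))"
        proof
          assume "Suc i < length ys"
          thus ?thesis using h by (auto simp: nth_append trails_def)
        next
          assume a: "Suc i = length ys"
          hence "ys ! i = last ys" using lastn by (metis diff_Suc_1)
          thus ?thesis using h a by (auto simp: nth_append)
        qed
      qed
    qed
  qed
qed

lemma trails_ne: "p \<in> trails pl cm cp e \<Longrightarrow> p \<noteq> []"
  by (simp add: trails_def)

lemma trails_last: "p \<in> trails pl cm cp e \<Longrightarrow> fst (last p) \<in> sB pl cm cp e"
  by (auto simp: trails_def last_conv_nth)

lemma trail_upd_eq: "p \<noteq> [] \<Longrightarrow> trail_upd p l = butlast p @ [(fst (last p), l)]"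
  by (simp add: trail_upd_def)

lemma trails_upd:
  assumes p: "p \<in> trails pl cm cp e" and l: "l < 3"
  shows "trail_upd p l \<in> trails pl cm cp e"
proof -
  have ne: "p \<noteq> []" using p by (simp add: trails_def)
  obtain t k where tk: "last p = (t,k)" by (cases "last p")
  have pe: "p = butlast p @ [(t,k)]" using ne tk by (metis append_butlast_last_id)
  show ?thesis
  proof (cases "butlast p = []")
    case True
    then show ?thesis using p l pe trails_last[OF p] tk by (simp add: trail_upd_def trails_single)
  next
    case False
    have "butlast p @ [(t,k)] \<in> trails pl cm cp e" using p pe by simp
    then show ?thesis using False l by (simp add: trail_upd_def tk trails_snoc)
  qed
qed

lemma img_eq:
  assumes "(p,q) \<in> S" "(q,p) \<in> S"
  shows "(Id_on T \<union> S\<^sup>+) `` {p} = (Id_on T \<union> S\<^sup>+) `` {q}"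
  using assms by (auto intro: trancl_into_trancl2 r_into_trancl trancl_trans)

lemma gen_class:
  assumes "(p,q) \<in> trail_gen pl cm cp e"
  shows "trail_class pl cm cp e p = trail_class pl cm cp e q"
  unfolding trail_class_def trail_equiv_def
  by (rule img_eq) (use assms in auto)

lemma gen_b:
  assumes "xs @ [(t,l),(s,n)] \<in> trails pl cm cp e" "xs @ [(t,n)] \<in> trails pl cm cp e" "l \<noteq> n"
  shows "trail_class pl cm cp e (xs @ [(t,l),(s,n)]) = trail_class pl cm cp e (xs @ [(t,n)])"
  by (rule gen_class) (use assms in \<open>unfold trail_gen_def, blast\<close>)

lemma gen_c:
  assumes "xs @ [(t,l)] \<in> trails pl cm cp e" "xs @ [(t,k)] \<in> trails pl cm cp e" "t \<in> sE pl cm cp e l k"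
  shows "trail_class pl cm cp e (xs @ [(t,l)]) = trail_class pl cm cp e (xs @ [(t,k)])"
  by (rule gen_class) (use assms in \<open>unfold trail_gen_def, blast\<close>)


lemma sE_B: "s \<in> sE pl cm cp e l k \<Longrightarrow> s \<in> sB pl cm cp e"
  by (auto simp: sE_def split: if_splits)

lemma move:
  assumes p: "p \<in> trails pl cm cp e" and l: "l < 3" and m: "m < 3" and lm: "l \<noteq> m"
    and s: "s \<in> sE pl cm cp e l m" and sl: "nth3 s l = nth3 (fst (last p)) l"
  shows "\<exists>q \<in> trails pl cm cp e. \<forall>v<3. trail_class pl cm cp e (trail_upd q v)
            = trail_class pl cm cp e (trail_upd p (if v = l then m else v))"
proof -
  define t where "t = fst (last p)"
  define ys where "ys = butlast p"
  have ne: "p \<noteq> []" using p by (rule trails_ne)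
  have upd: "\<And>k. trail_upd p k = ys @ [(t,k)]" using ne by (simp add: trail_upd_def ys_def t_def)
  have tr: "\<And>k. k < 3 \<Longrightarrow> ys @ [(t,k)] \<in> trails pl cm cp e" using trails_upd[OF p] upd by metis
  have tB: "t \<in> sB pl cm cp e" using trails_last[OF p] t_def by simp
  show ?thesis
  proof (cases "s = t")
    case True
    show ?thesis
    proof (rule bexI[of _ p], intro allI impI)
      fix v :: nat assume v: "v < 3"
      show "trail_class pl cm cp e (trail_upd p v) = trail_class pl cm cp e (trail_upd p (if v = l then m else v))"
      proof (cases "v = l")
        case True
        then show ?thesis unfolding upd using gen_c[OF tr[OF l] tr[OF m]] s \<open>s = t\<close> by simp
      qed simp
    qed (rule p)
  next
    case False
    have sB: "s \<in> sB pl cm cp e" using s by (rule sE_B)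
    have trq: "\<And>k. k < 3 \<Longrightarrow> (ys @ [(t,l)]) @ [(s,k)] \<in> trails pl cm cp e"
      by (rule iffD2[OF trails_snoc]) (use tr[OF l] sB False tB sl in \<open>auto simp: sT_def t_def\<close>)
    have updq: "\<And>k. trail_upd (ys @ [(t,l),(s,l)]) k = ys @ [(t,l),(s,k)]"
      using butlast_snoc[of "ys @ [(t,l)]" "(s,l)"] by (simp add: trail_upd_def)
    show ?thesis
    proof (rule bexI[of _ "ys @ [(t,l),(s,l)]"], intro allI impI)
      fix v :: nat assume v: "v < 3"
      show "trail_class pl cm cp e (trail_upd (ys @ [(t,l),(s,l)]) v)
            = trail_class pl cm cp e (trail_upd p (if v = l then m else v))"
      proof (cases "v = l")
        case True
        have "trail_class pl cm cp e ((ys @ [(t,l)]) @ [(s,l)]) = trail_class pl cm cp e ((ys @ [(t,l)]) @ [(s,m)])"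
          using gen_c[OF trq[OF l] trq[OF m]] s by simp
        also have "\<dots> = trail_class pl cm cp e (ys @ [(t,m)])"
          using gen_b[of ys t l s m] trq[OF m] tr[OF m] lm by simp
        finally show ?thesis using True by (simp add: updq upd)
      next
        case False
        show ?thesis using gen_b[of ys t l s v] trq[OF v] tr[OF v] False by (simp add: updq upd)
      qed
    next
      show "ys @ [(t,l),(s,l)] \<in> trails pl cm cp e" using trq[OF l] by simp
    qed
  qed
qed

definition reach where
  "reach pl cm cp e f \<longleftrightarrow> (\<forall>p \<in> trails pl cm cp e. \<exists>q \<in> trails pl cm cp e. \<forall>v<3.
     trail_class pl cm cp e (trail_upd q v) = trail_class pl cm cp e (trail_upd p (f v)))"

definition mv :: "nat \<Rightarrow> nat \<Rightarrow> nat \<Rightarrow> nat" where "mv l m = (\<lambda>v. if v = l then m else v)"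

lemma reach_id: "reach pl cm cp e id"
  unfolding reach_def
proof (intro ballI)
  fix p assume "p \<in> trails pl cm cp e"
  thus "\<exists>q\<in>trails pl cm cp e. \<forall>v<3. trail_class pl cm cp e (trail_upd q v) = trail_class pl cm cp e (trail_upd p (id v))"
    by (intro bexI[of _ p]) simp_all
qed

lemma reach_comp:
  assumes "reach pl cm cp e f" "reach pl cm cp e g" "\<forall>v<3. g v < 3"
  shows "reach pl cm cp e (f \<circ> g)"
  unfolding reach_def
proof
  fix p assume "p \<in> trails pl cm cp e"
  then obtain q where q: "q \<in> trails pl cm cp e" and hq: "\<forall>v<3.
     trail_class pl cm cp e (trail_upd q v) = trail_class pl cm cp e (trail_upd p (f v))"
    using assms(1) unfolding reach_def by blast
  then obtain r where r: "r \<in> trails pl cm cp e" and hr: "\<forall>v<3.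
     trail_class pl cm cp e (trail_upd r v) = trail_class pl cm cp e (trail_upd q (g v))"
    using assms(2) unfolding reach_def by blast
  show "\<exists>r \<in> trails pl cm cp e. \<forall>v<3.
     trail_class pl cm cp e (trail_upd r v) = trail_class pl cm cp e (trail_upd p ((f \<circ> g) v))"
  proof (rule bexI[OF _ r], intro allI impI)
    fix v :: nat assume v: "v < 3"
    have "g v < 3" using assms(3) v by blast
    thus "trail_class pl cm cp e (trail_upd r v) = trail_class pl cm cp e (trail_upd p ((f \<circ> g) v))"
      using hr hq v by simp
  qed
qed

lemma reach_mv:
  assumes "l < 3" "m < 3" "l \<noteq> m"
    and "\<forall>t \<in> sB pl cm cp e. \<exists>s \<in> sE pl cm cp e l m. nth3 s l = nth3 t l"
  shows "reach pl cm cp e (mv l m)"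
  unfolding reach_def mv_def
proof
  fix p assume p: "p \<in> trails pl cm cp e"
  then obtain s where "s \<in> sE pl cm cp e l m" "nth3 s l = nth3 (fst (last p)) l"
    using bspec[OF assms(4) trails_last[OF p]] by (elim bexE) simp
  from move[OF p assms(1-3) this] show "\<exists>q \<in> trails pl cm cp e. \<forall>v<3.
     trail_class pl cm cp e (trail_upd q v) = trail_class pl cm cp e (trail_upd p (if v = l then m else v))" .
qed



locale hunt =
  fixes pl :: "'a \<Rightarrow> 'a \<Rightarrow> 'a" (infixl "\<oplus>" 65) and n :: "'a \<Rightarrow> 'a"
  assumes comm: "x \<oplus> y = y \<oplus> x" and assoc: "x \<oplus> (y \<oplus> z) = (x \<oplus> y) \<oplus> z"
  and H: "n (n x \<oplus> n y) \<oplus> n (n x \<oplus> y) = x"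
begin
lemma l1: "x \<oplus> n x = n x \<oplus> n (n x)"
  by (smt (verit) H assoc comm)
lemma f1: "n (n b \<oplus> a) \<oplus> n (n b \<oplus> n a) = b"
  using H comm by metis
lemma dn0: "n (n a) = a"
  using f1 by (metis comm l1)
lemma lc: "x \<oplus> (y \<oplus> z) = y \<oplus> (x \<oplus> z)" by (metis assoc comm)
lemma l2: "x \<oplus> n x = y \<oplus> n y"
proof -
  have 1: "x \<oplus> n x = (n (n x \<oplus> n y) \<oplus> n (n x \<oplus> y)) \<oplus> (n (x \<oplus> n y) \<oplus> n (x \<oplus> y))"
    using H[of x y] H[of "n x" y] by (simp add: dn0)
  have 2: "y \<oplus> n y = (n (n y \<oplus> n x) \<oplus> n (n y \<oplus> x)) \<oplus> (n (y \<oplus> n x) \<oplus> n (y \<oplus> x))"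
    using H[of y x] H[of "n y" x] by (simp add: dn0)
  show ?thesis unfolding 1 2 by (simp add: comm lc assoc[symmetric])
qed
definition "tp = undefined \<oplus> n undefined"
definition "bt = n tp"
definition "m x y = n (n x \<oplus> n y)"
lemma tp: "x \<oplus> n x = tp" using l2 tp_def by metis
lemma dn: "n (n x) = x"
  by (rule dn0)
lemma l3: "x \<oplus> bt = x"
  by (metis H assoc bt_def dn tp)
lemma idem: "x \<oplus> x = x"
  by (metis H dn l3 tp)
lemma l4: "x \<oplus> tp = tp"
  by (metis assoc idem tp)
lemma Hm: "m x y \<oplus> m x (n y) = x"
  unfolding m_def using H[of x y] by (simp add: dn)
lemma absorb: "x \<oplus> m x y = x"
  by (metis Hm assoc comm idem)
lemma m_comm: "m x y = m y x" by (simp add: m_def comm)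
lemma m_assoc: "m (m x y) z = m x (m y z)" by (simp add: m_def dn assoc)
lemma m_idem: "m x x = x" by (simp add: m_def idem dn)
lemma le_m: "x \<oplus> y = y \<longleftrightarrow> m x y = x"
proof
  assume a: "x \<oplus> y = y"
  have "m (n x) (n y) = n y" using a by (simp add: m_def dn)
  hence "n x \<oplus> n y = n x" using absorb[of "n x" "n y"] by simp
  thus "m x y = x" by (simp add: m_def dn)
next
  assume "m x y = x"
  thus "x \<oplus> y = y" using absorb[of y x] by (simp add: m_comm comm)
qed
lemma m_le1: "m x y \<oplus> x = x" unfolding le_m by (metis m_assoc m_comm m_idem)
lemma m_le2: "m x y \<oplus> y = y" using m_le1 m_comm by metis
lemma le_trans: "x \<oplus> y = y \<Longrightarrow> y \<oplus> z = z \<Longrightarrow> x \<oplus> z = z" by (metis assoc)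
lemma le_meet: "x \<oplus> y = y \<Longrightarrow> x \<oplus> z = z \<Longrightarrow> x \<oplus> m y z = m y z"
  by (simp add: le_m) (metis m_assoc)
lemma bt_le: "bt \<oplus> x = x" using l3 comm by metis
lemma m_tp: "m x bt = bt" by (simp add: m_def bt_def dn l4)
lemma mbt_le: "m a z = bt \<Longrightarrow> z \<oplus> n a = n a"
proof -
  assume h: "m a z = bt"
  have "z = m z a \<oplus> m z (n a)" using Hm by simp
  also have "\<dots> = m z (n a)" using h m_comm bt_le by metis
  finally show ?thesis using le_m by metis
qed
lemma le_mbt: "z \<oplus> n a = n a \<Longrightarrow> m z a = bt"
proof -
  assume h: "z \<oplus> n a = n a"
  hence "m z (n a) = z" using le_m by metis
  hence "m z a = m z (m (n a) a)" by (metis m_assoc)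
  also have "m (n a) a = bt" by (simp add: m_def dn bt_def comm tp)
  finally show ?thesis by (simp add: m_tp)
qed
end


locale wa =
  fixes pl :: "'a \<Rightarrow> 'a \<Rightarrow> 'a" and cm :: "'a \<Rightarrow> 'a" and cp :: "'a \<Rightarrow> 'a \<Rightarrow> 'a"
    and cv :: "'a \<Rightarrow> 'a" and e :: 'a
  assumes WA: "WA pl cm cp cv e"
begin

lemma ax:
  "pl x y = pl y x"
  "pl x (pl y z) = pl (pl x y) z"
  "pl (cm (pl (cm x) (cm y))) (cm (pl (cm x) y)) = x"
  "cp (pl x y) z = pl (cp x z) (cp y z)"
  "cp x e = x"
  "cv (cv x) = x"
  "cv (pl x y) = pl (cv x) (cv y)"
  "cv (cp x y) = cp (cv y) (cv x)"
  "pl (cp (cv x) (cm (cp x y))) (cm y) = cm y"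
  using WA unfolding WA_def by blast+

sublocale hunt pl cm
  by unfold_locales (rule ax)+

lemma bot_eq: "wa_bot pl cm e = bt"
  by (simp add: wa_bot_def wa_top_def tp bt_def)

lemma meet_eq: "wa_meet pl cm x y = m x y"
  by (simp add: wa_meet_def m_def)

lemma cp_mono_l: "pl x y = y \<Longrightarrow> pl (cp x z) (cp y z) = cp y z"
  by (metis ax(4))

lemma cv_inj: "cv x = cv y \<Longrightarrow> x = y" by (metis ax(6))

lemma cp_add_r: "cp x (pl y z) = pl (cp x y) (cp x z)"
  by (rule cv_inj) (simp add: ax(4,7,8))

lemma cp_mono_r: "pl y z = z \<Longrightarrow> pl (cp x y) (cp x z) = cp x z"
  by (metis cp_add_r)

lemma cv_mono: "pl x y = y \<Longrightarrow> pl (cv x) (cv y) = cv y"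
  by (metis ax(7))

lemma cv_bt: "cv bt = bt"
proof -
  have "pl bt (cv bt) = cv bt" by (rule bt_le)
  hence "pl (cv bt) bt = bt" using cv_mono ax(6) by metis
  thus ?thesis using l3 comm by metis
qed

lemma cv_e: "cv e = e"
proof -
  have "cv (cv e) = cv (cp (cv e) e)" using ax(5) by metis
  also have "\<dots> = cp (cv e) e" by (simp add: ax(6,8))
  also have "\<dots> = cv e" by (rule ax(5))
  finally show ?thesis using ax(6) by metis
qed

lemma cycle: "m (cp x y) z = bt \<Longrightarrow> m (cp (cv x) z) y = bt"
proof -
  assume h: "m (cp x y) z = bt"
  have "pl z (cm (cp x y)) = cm (cp x y)" using mbt_le[OF h] .
  hence "pl (cp (cv x) z) (cp (cv x) (cm (cp x y))) = cp (cv x) (cm (cp x y))" by (rule cp_mono_r)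
  hence "pl (cp (cv x) z) (cm y) = cm y" using ax(9) le_trans by metis
  thus ?thesis by (rule le_mbt)
qed

definition "atom a \<longleftrightarrow> a \<noteq> bt \<and> (\<forall>y. pl y a = a \<longrightarrow> y = bt \<or> y = a)"

lemma atom_eq: "wa_atom pl cm e a \<longleftrightarrow> atom a"
  by (simp add: wa_atom_def atom_def bot_eq wa_le_def)

lemma atom_dich: "atom a \<Longrightarrow> m a y = bt \<or> pl a y = y"
  unfolding atom_def using m_le1[of a y] le_m by metis

lemma atom_cv: "atom a \<Longrightarrow> atom (cv a)"
  unfolding atom_def by (metis ax(6) cv_bt cv_mono)

lemma R:
  assumes at: "wa_atomic pl cm e" and a: "atom a"
  shows "\<exists>i. atom i \<and> pl i e = e \<and> pl a (cp a i) = cp a i \<and> pl i (cp (cv a) a) = cp (cv a) a"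
proof -
  define w where "w = m (cp (cv a) a) e"
  have "w \<noteq> bt"
  proof
    assume "w = bt"
    hence "m (cp (cv (cv a)) e) a = bt" unfolding w_def by (rule cycle)
    hence "a = bt" by (simp add: ax(5,6) m_idem)
    thus False using a by (simp add: atom_def)
  qed
  then obtain i where i: "atom i" "pl i w = w"
    using at unfolding wa_atomic_def bot_eq atom_eq wa_le_def by blast
  have ie: "pl i e = e" using i(2) m_le2 le_trans unfolding w_def by metis
  have ic: "pl i (cp (cv a) a) = cp (cv a) a" using i(2) m_le1 le_trans unfolding w_def by metis
  have "pl a (cp a i) = cp a i"
  proof -
    { assume "m a (cp a i) = bt"
      hence "m (cp a i) a = bt" by (simp add: m_comm)
      hence "m (cp (cv a) a) i = bt" by (rule cycle)
      moreover have "m i (cp (cv a) a) = i" using ic le_m by metis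
      ultimately have "i = bt" by (simp add: m_comm)
      hence False using i(1) by (simp add: atom_def) }
    thus ?thesis using atom_dich[OF a] by blast
  qed
  thus ?thesis using i(1) ie ic by blast
qed

lemma L:
  assumes at: "wa_atomic pl cm e" and a: "atom a"
  shows "\<exists>i. atom i \<and> pl i e = e \<and> pl a (cp i a) = cp i a \<and> pl i (cp a (cv a)) = cp a (cv a)"
proof -
  obtain j where j: "atom j" "pl j e = e" "pl (cv a) (cp (cv a) j) = cp (cv a) j"
     "pl j (cp (cv (cv a)) (cv a)) = cp (cv (cv a)) (cv a)"
    using R[OF at atom_cv[OF a]] by blast
  have 1: "atom (cv j)" using atom_cv j(1) by blast
  have 2: "pl (cv j) e = e" using cv_mono[OF j(2)] cv_e by simp
  have 3: "pl a (cp (cv j) a) = cp (cv j) a" using cv_mono[OF j(3)] by (simp add: ax(6,8))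
  have 4: "pl (cv j) (cp a (cv a)) = cp a (cv a)" using cv_mono[OF j(4)] by (simp add: ax(6,8))
  show ?thesis using 1 2 3 4 by blast
qed

end


context wa
begin

lemma sB_iff: "(x0,x1,x2) \<in> sB pl cm cp e \<longleftrightarrow> atom x0 \<and> atom x1 \<and> atom x2 \<and> pl x1 (cp x2 x0) = cp x2 x0"
  by (simp add: sB_def all3 nth3_def atom_eq wa_le_def)

lemma mv12:
  assumes at: "wa_atomic pl cm e"
  shows "\<forall>t\<in>sB pl cm cp e. \<exists>s\<in>sE pl cm cp e 1 2. nth3 s 1 = nth3 t 1"
proof
  fix t assume tB: "t \<in> sB pl cm cp e"
  obtain x0 x1 x2 where t: "t = (x0,x1,x2)" by (cases t)
  with tB have a: "atom x0" "atom x1" "atom x2" by (simp_all add: sB_iff)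
  obtain i where i: "atom i" "pl i e = e" "pl x1 (cp x1 i) = cp x1 i" "pl i (cp (cv x1) x1) = cp (cv x1) x1"
    using R[OF at a(2)] by blast
  show "\<exists>s\<in>sE pl cm cp e 1 2. nth3 s 1 = nth3 t 1"
    by (rule bexI[of _ "(i,x1,x1)"]) (use i a atom_cv in \<open>simp_all add: t sE_def sB_iff nth3_def wa_le_def\<close>)
qed

lemma mv21:
  assumes at: "wa_atomic pl cm e"
  shows "\<forall>t\<in>sB pl cm cp e. \<exists>s\<in>sE pl cm cp e 2 1. nth3 s 2 = nth3 t 2"
proof
  fix t assume tB: "t \<in> sB pl cm cp e"
  obtain x0 x1 x2 where t: "t = (x0,x1,x2)" by (cases t)
  with tB have a: "atom x0" "atom x1" "atom x2" by (simp_all add: sB_iff)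
  obtain i where i: "atom i" "pl i e = e" "pl x2 (cp x2 i) = cp x2 i" "pl i (cp (cv x2) x2) = cp (cv x2) x2"
    using R[OF at a(3)] by blast
  show "\<exists>s\<in>sE pl cm cp e 2 1. nth3 s 2 = nth3 t 2"
    by (rule bexI[of _ "(i,x2,x2)"]) (use i a atom_cv in \<open>simp_all add: t sE_def sB_iff nth3_def wa_le_def\<close>)
qed

lemma mv01:
  assumes at: "wa_atomic pl cm e"
  shows "\<forall>t\<in>sB pl cm cp e. \<exists>s\<in>sE pl cm cp e 0 1. nth3 s 0 = nth3 t 0"
proof
  fix t assume tB: "t \<in> sB pl cm cp e"
  obtain x0 x1 x2 where t: "t = (x0,x1,x2)" by (cases t)
  with tB have a: "atom x0" "atom x1" "atom x2" by (simp_all add: sB_iff)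
  obtain i where i: "atom i" "pl i e = e" "pl x0 (cp i x0) = cp i x0" "pl i (cp x0 (cv x0)) = cp x0 (cv x0)"
    using L[OF at a(1)] by blast
  show "\<exists>s\<in>sE pl cm cp e 0 1. nth3 s 0 = nth3 t 0"
    by (rule bexI[of _ "(x0,x0,i)"]) (use i a atom_cv in \<open>simp_all add: t sE_def sB_iff nth3_def wa_le_def\<close>)
qed

lemma mv10:
  assumes at: "wa_atomic pl cm e"
  shows "\<forall>t\<in>sB pl cm cp e. \<exists>s\<in>sE pl cm cp e 1 0. nth3 s 1 = nth3 t 1"
proof
  fix t assume tB: "t \<in> sB pl cm cp e"
  obtain x0 x1 x2 where t: "t = (x0,x1,x2)" by (cases t)
  with tB have a: "atom x0" "atom x1" "atom x2" by (simp_all add: sB_iff)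
  obtain i where i: "atom i" "pl i e = e" "pl x1 (cp i x1) = cp i x1" "pl i (cp x1 (cv x1)) = cp x1 (cv x1)"
    using L[OF at a(2)] by blast
  show "\<exists>s\<in>sE pl cm cp e 1 0. nth3 s 1 = nth3 t 1"
    by (rule bexI[of _ "(x1,x1,i)"]) (use i a atom_cv in \<open>simp_all add: t sE_def sB_iff nth3_def wa_le_def\<close>)
qed

lemma mv02:
  assumes at: "wa_atomic pl cm e"
  shows "\<forall>t\<in>sB pl cm cp e. \<exists>s\<in>sE pl cm cp e 0 2. nth3 s 0 = nth3 t 0"
proof
  fix t assume tB: "t \<in> sB pl cm cp e"
  obtain x0 x1 x2 where t: "t = (x0,x1,x2)" by (cases t)
  with tB have a: "atom x0" "atom x1" "atom x2" by (simp_all add: sB_iff)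
  obtain i where i: "atom i" "pl i e = e" "pl x0 (cp x0 i) = cp x0 i" "pl i (cp (cv x0) x0) = cp (cv x0) x0"
    using R[OF at a(1)] by blast
  show "\<exists>s\<in>sE pl cm cp e 0 2. nth3 s 0 = nth3 t 0"
    by (rule bexI[of _ "(x0,i,cv x0)"]) (use i a atom_cv in \<open>simp_all add: t sE_def sB_iff nth3_def wa_le_def\<close>)
qed

lemma mv20:
  assumes at: "wa_atomic pl cm e"
  shows "\<forall>t\<in>sB pl cm cp e. \<exists>s\<in>sE pl cm cp e 2 0. nth3 s 2 = nth3 t 2"
proof
  fix t assume tB: "t \<in> sB pl cm cp e"
  obtain x0 x1 x2 where t: "t = (x0,x1,x2)" by (cases t)
  with tB have a: "atom x0" "atom x1" "atom x2" by (simp_all add: sB_iff)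
  obtain i where i: "atom i" "pl i e = e" "pl x2 (cp i x2) = cp i x2" "pl i (cp x2 (cv x2)) = cp x2 (cv x2)"
    using L[OF at a(3)] by blast
  show "\<exists>s\<in>sE pl cm cp e 2 0. nth3 s 2 = nth3 t 2"
    by (rule bexI[of _ "(cv x2,i,x2)"]) (use i a atom_cv in \<open>simp_all add: t sE_def sB_iff nth3_def wa_le_def\<close>)
qed

end

theorem lemma8:
  fixes pl :: "'a \<Rightarrow> 'a \<Rightarrow> 'a" and cm :: "'a \<Rightarrow> 'a" and cp :: "'a \<Rightarrow> 'a \<Rightarrow> 'a"
    and cv :: "'a \<Rightarrow> 'a" and e :: 'a
    and u :: "(('a \<times> 'a \<times> 'a) \<times> nat) list set \<times> (('a \<times> 'a \<times> 'a) \<times> nat) list set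
              \<times> (('a \<times> 'a \<times> 'a) \<times> nat) list set"
    and \<pi> :: "nat \<Rightarrow> nat"
  assumes "WA pl cm cp cv e"
    and "wa_complete pl"
    and "wa_atomic pl cm e"
    and "u \<in> VB pl cm cp e"
    and "\<pi> ` {0,1,2} \<subseteq> {0,1,2}"
    and "\<not> bij_betw \<pi> {0,1,2} {0,1,2}"
  shows "(nth3 u (\<pi> 0), nth3 u (\<pi> 1), nth3 u (\<pi> 2)) \<in> VB pl cm cp e"
proof -
  interpret wa pl cm cp cv e by unfold_locales (rule assms(1))
  have M: "reach pl cm cp e (mv l m)" if "l < 3" "m < 3" "l \<noteq> m" for l m
  proof -
    have "(l,m) \<in> {(0,1),(0,2),(1,0),(1,2),(2,0),(2,1)}" using that by (auto simp: all3)
    thus ?thesis using reach_mv[OF _ _ _ mv01[OF assms(3)]] reach_mv[OF _ _ _ mv02[OF assms(3)]]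
      reach_mv[OF _ _ _ mv10[OF assms(3)]] reach_mv[OF _ _ _ mv12[OF assms(3)]]
      reach_mv[OF _ _ _ mv20[OF assms(3)]] reach_mv[OF _ _ _ mv21[OF assms(3)]] by auto
  qed
  have RC: "reach pl cm cp e (f \<circ> mv l m)" if "reach pl cm cp e f" "l < 3" "m < 3" "l \<noteq> m" for f l m
    by (rule reach_comp[OF that(1) M[OF that(2-4)]]) (use that in \<open>auto simp: mv_def\<close>)
  have t000: "\<exists>f. reach pl cm cp e f \<and> f 0 = 0 \<and> f 1 = 0 \<and> f 2 = 0"
    by (rule exI[of _ "id \<circ> mv 1 0 \<circ> mv 2 0"]) (intro conjI RC reach_id; simp add: mv_def)
  have t001: "\<exists>f. reach pl cm cp e f \<and> f 0 = 0 \<and> f 1 = 0 \<and> f 2 = 1"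
    by (rule exI[of _ "id \<circ> mv 2 1 \<circ> mv 1 0"]) (intro conjI RC reach_id; simp add: mv_def)
  have t002: "\<exists>f. reach pl cm cp e f \<and> f 0 = 0 \<and> f 1 = 0 \<and> f 2 = 2"
    by (rule exI[of _ "id \<circ> mv 1 0"]) (intro conjI RC reach_id; simp add: mv_def)
  have t010: "\<exists>f. reach pl cm cp e f \<and> f 0 = 0 \<and> f 1 = 1 \<and> f 2 = 0"
    by (rule exI[of _ "id \<circ> mv 2 0"]) (intro conjI RC reach_id; simp add: mv_def)
  have t011: "\<exists>f. reach pl cm cp e f \<and> f 0 = 0 \<and> f 1 = 1 \<and> f 2 = 1"
    by (rule exI[of _ "id \<circ> mv 2 1"]) (intro conjI RC reach_id; simp add: mv_def)
  have t020: "\<exists>f. reach pl cm cp e f \<and> f 0 = 0 \<and> f 1 = 2 \<and> f 2 = 0"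
    by (rule exI[of _ "id \<circ> mv 1 2 \<circ> mv 2 0"]) (intro conjI RC reach_id; simp add: mv_def)
  have t022: "\<exists>f. reach pl cm cp e f \<and> f 0 = 0 \<and> f 1 = 2 \<and> f 2 = 2"
    by (rule exI[of _ "id \<circ> mv 1 2"]) (intro conjI RC reach_id; simp add: mv_def)
  have t100: "\<exists>f. reach pl cm cp e f \<and> f 0 = 1 \<and> f 1 = 0 \<and> f 2 = 0"
    by (rule exI[of _ "id \<circ> mv 2 0 \<circ> mv 0 1 \<circ> mv 1 2"]) (intro conjI RC reach_id; simp add: mv_def)
  have t101: "\<exists>f. reach pl cm cp e f \<and> f 0 = 1 \<and> f 1 = 0 \<and> f 2 = 1"
    by (rule exI[of _ "id \<circ> mv 2 1 \<circ> mv 1 0 \<circ> mv 0 2"]) (intro conjI RC reach_id; simp add: mv_def)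
  have t110: "\<exists>f. reach pl cm cp e f \<and> f 0 = 1 \<and> f 1 = 1 \<and> f 2 = 0"
    by (rule exI[of _ "id \<circ> mv 2 0 \<circ> mv 0 1"]) (intro conjI RC reach_id; simp add: mv_def)
  have t111: "\<exists>f. reach pl cm cp e f \<and> f 0 = 1 \<and> f 1 = 1 \<and> f 2 = 1"
    by (rule exI[of _ "id \<circ> mv 0 1 \<circ> mv 2 0"]) (intro conjI RC reach_id; simp add: mv_def)
  have t112: "\<exists>f. reach pl cm cp e f \<and> f 0 = 1 \<and> f 1 = 1 \<and> f 2 = 2"
    by (rule exI[of _ "id \<circ> mv 0 1"]) (intro conjI RC reach_id; simp add: mv_def)
  have t121: "\<exists>f. reach pl cm cp e f \<and> f 0 = 1 \<and> f 1 = 2 \<and> f 2 = 1"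
    by (rule exI[of _ "id \<circ> mv 0 1 \<circ> mv 1 2 \<circ> mv 2 0"]) (intro conjI RC reach_id; simp add: mv_def)
  have t122: "\<exists>f. reach pl cm cp e f \<and> f 0 = 1 \<and> f 1 = 2 \<and> f 2 = 2"
    by (rule exI[of _ "id \<circ> mv 0 1 \<circ> mv 1 2"]) (intro conjI RC reach_id; simp add: mv_def)
  have t200: "\<exists>f. reach pl cm cp e f \<and> f 0 = 2 \<and> f 1 = 0 \<and> f 2 = 0"
    by (rule exI[of _ "id \<circ> mv 1 0 \<circ> mv 0 2 \<circ> mv 2 1"]) (intro conjI RC reach_id; simp add: mv_def)
  have t202: "\<exists>f. reach pl cm cp e f \<and> f 0 = 2 \<and> f 1 = 0 \<and> f 2 = 2"
    by (rule exI[of _ "id \<circ> mv 1 0 \<circ> mv 0 2"]) (intro conjI RC reach_id; simp add: mv_def)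
  have t211: "\<exists>f. reach pl cm cp e f \<and> f 0 = 2 \<and> f 1 = 1 \<and> f 2 = 1"
    by (rule exI[of _ "id \<circ> mv 0 2 \<circ> mv 2 1"]) (intro conjI RC reach_id; simp add: mv_def)
  have t212: "\<exists>f. reach pl cm cp e f \<and> f 0 = 2 \<and> f 1 = 1 \<and> f 2 = 2"
    by (rule exI[of _ "id \<circ> mv 0 2"]) (intro conjI RC reach_id; simp add: mv_def)
  have t220: "\<exists>f. reach pl cm cp e f \<and> f 0 = 2 \<and> f 1 = 2 \<and> f 2 = 0"
    by (rule exI[of _ "id \<circ> mv 1 2 \<circ> mv 2 0 \<circ> mv 0 1"]) (intro conjI RC reach_id; simp add: mv_def)
  have t221: "\<exists>f. reach pl cm cp e f \<and> f 0 = 2 \<and> f 1 = 2 \<and> f 2 = 1"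
    by (rule exI[of _ "id \<circ> mv 0 2 \<circ> mv 2 1 \<circ> mv 1 0"]) (intro conjI RC reach_id; simp add: mv_def)
  have t222: "\<exists>f. reach pl cm cp e f \<and> f 0 = 2 \<and> f 1 = 2 \<and> f 2 = 2"
    by (rule exI[of _ "id \<circ> mv 0 2 \<circ> mv 1 0"]) (intro conjI RC reach_id; simp add: mv_def)
  note T = t000 t001 t002 t010 t011 t020 t022 t100 t101 t110 t111 t112 t121 t122 t200 t202 t211 t212 t220 t221 t222
  have v0: "\<pi> 0 = 0 \<or> \<pi> 0 = 1 \<or> \<pi> 0 = 2" using assms(5) by auto
  have v1: "\<pi> 1 = 0 \<or> \<pi> 1 = 1 \<or> \<pi> 1 = 2" using assms(5) by auto
  have v2: "\<pi> 2 = 0 \<or> \<pi> 2 = 1 \<or> \<pi> 2 = 2" using assms(5) by auto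
  have dup: "\<pi> 0 = \<pi> 1 \<or> \<pi> 0 = \<pi> 2 \<or> \<pi> 1 = \<pi> 2"
  proof (rule ccontr)
    assume "\<not> (\<pi> 0 = \<pi> 1 \<or> \<pi> 0 = \<pi> 2 \<or> \<pi> 1 = \<pi> 2)"
    hence d: "\<pi> 0 \<noteq> \<pi> 1" "\<pi> 0 \<noteq> \<pi> 2" "\<pi> 1 \<noteq> \<pi> 2" by auto
    have inj: "inj_on \<pi> {0,1,2}" using d by (auto simp: inj_on_def)
    have "card (\<pi> ` {0,1,2}) = card {0,1,2::nat}" using card_image[OF inj] by simp
    hence "\<pi> ` {0,1,2} = {0,1,2}" using card_subset_eq[OF _ assms(5)] by simp
    hence "bij_betw \<pi> {0,1,2} {0,1,2}" using inj by (simp add: bij_betw_def)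
    with assms(6) show False ..
  qed
  have "\<exists>f. reach pl cm cp e f \<and> f 0 = \<pi> 0 \<and> f 1 = \<pi> 1 \<and> f 2 = \<pi> 2"
  proof -
    have "\<pi> 0 = \<pi> 1 \<or> \<pi> 0 = \<pi> 2 \<or> \<pi> 1 = \<pi> 2 \<longrightarrow> (\<exists>f. reach pl cm cp e f \<and> f 0 = \<pi> 0 \<and> f 1 = \<pi> 1 \<and> f 2 = \<pi> 2)"
      using v0 v1 v2
      apply (elim disjE)
      apply (simp_all only: T simp_thms zero_neq_one one_neq_zero numeral_One num.distinct zero_neq_numeral numeral_eq_iff numeral_neq_zero)
      apply simp_all
      done
    thus ?thesis using dup by blast
  qed
  then obtain f where f: "reach pl cm cp e f" "f 0 = \<pi> 0" "f 1 = \<pi> 1" "f 2 = \<pi> 2"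
    by blast
  from assms(4) obtain p where p: "p \<in> trails pl cm cp e" and
    u: "u = (trail_class pl cm cp e (trail_upd p 0), trail_class pl cm cp e (trail_upd p 1),
             trail_class pl cm cp e (trail_upd p 2))"
    unfolding VB_def by blast
  obtain q where q: "q \<in> trails pl cm cp e" and hq: "\<forall>v<3.
     trail_class pl cm cp e (trail_upd q v) = trail_class pl cm cp e (trail_upd p (f v))"
    using f(1) p unfolding reach_def by blast
  have nu: "nth3 u j = trail_class pl cm cp e (trail_upd p j)" if "j \<in> {0,1,2}" for j
    using that by (auto simp: u nth3_def)
  have "nth3 u (\<pi> v) = trail_class pl cm cp e (trail_upd q v)" if "v < 3" for v
  proof -
    have "v = 0 \<or> v = 1 \<or> v = 2" using that by auto
    thus ?thesis using nu v0 v1 v2 hq f by auto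
  qed
  hence "(nth3 u (\<pi> 0), nth3 u (\<pi> 1), nth3 u (\<pi> 2)) = (trail_class pl cm cp e (trail_upd q 0),
     trail_class pl cm cp e (trail_upd q 1), trail_class pl cm cp e (trail_upd q 2))" by simp
  thus ?thesis unfolding VB_def using q by blast
qed

end
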